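(* The adjoint $W^*$ restricts to an affine homeomorphism (weak* topologies) of $\mathcal{M}_1$ onto $\mathcal{L}_1$, and to an affine homeomorphism of $\mathcal{R}$ onto $\mathcal{C}$.
   Context: $L^{\infty}(\mathbb{R}_+)$, $L^{\infty}(\mathbb{R}_+^{\times})$: real-valued essentially bounded measurable functions on $[0,\infty)$ and $[1,\infty)$. A mean is a positive linear functional with value $1$ at $1$. $W:L^{\infty}(\mathbb{R}_+^{\times})\to L^{\infty}(\mathbb{R}_+)$, $(Wf)(x)=f(e^x)$, and $(W^*\varphi)(f)=\varphi(Wf)$. $\mathcal{M}_1$: means $\varphi$ on $L^{\infty}(\mathbb{R}_+)$ with $\varphi(f)\le\lim_{\theta\to\infty}\limsup_{x\to\infty}\frac1\theta\int_x^{x+\theta}f\,dt$ for all $f$. $\mathcal{R}$: means $\varphi$ on $L^{\infty}(\mathbb{R}_+)$ with $\varphi(f)\le\limsup_{x\to\infty}e^{-x}\int_0^xf(t)e^t\,dt$ for all $f$. $\mathcal{L}_1$: means $\psi$ on $L^{\infty}(\mathbb{R}_+^{\times})$ with $\psi(f)\le\lim_{\theta\to\infty}\limsup_{x\to\infty}\frac{1}{\log\theta}\int_x^{\theta x}f(t)\frac{dt}{t}$ for all $f$. $\mathcal{C}$: means $\psi$ on $L^{\infty}(\mathbb{R}_+^{\times})$ with $\psi(f)\le\limsup_{x\to\infty}\frac1x\int_1^xf(t)\,dt$ for all $f$. *)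

theory Defs
  imports "HOL-Analysis.Analysis"
begin

text \<open>Elements are representatives; means are required to
  be positive w.r.t. a.e. order, hence automatically respect a.e. equality.\<close>
definition Linf :: "real set \<Rightarrow> (real \<Rightarrow> real) set" where
  "Linf S = {f. f \<in> borel_measurable (lebesgue_on S) \<and>
                 (\<exists>C. AE x in lebesgue_on S. \<bar>f x\<bar> \<le> C)}"

text \<open>Means: positive linear functionals with value 1 at the constant 1, stored as
  extensional functions on Linf S (points of the weak* topology space).\<close>
definition mean :: "real set \<Rightarrow> ((real \<Rightarrow> real) \<Rightarrow> real) \<Rightarrow> bool" where
  "mean S \<phi> \<longleftrightarrow> \<phi> \<in> extensional (Linf S) \<and>
     (\<forall>f\<in>Linf S. \<forall>g\<in>Linf S. \<phi> (\<lambda>x. f x + g x) = \<phi> f + \<phi> g) \<and>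
     (\<forall>c. \<forall>f\<in>Linf S. \<phi> (\<lambda>x. c * f x) = c * \<phi> f) \<and>
     (\<forall>f\<in>Linf S. (AE x in lebesgue_on S. 0 \<le> f x) \<longrightarrow> 0 \<le> \<phi> f) \<and>
     \<phi> (\<lambda>x. 1) = 1"

definition weak_star :: "real set \<Rightarrow> ((real \<Rightarrow> real) \<Rightarrow> real) topology" where
  "weak_star S = product_topology (\<lambda>_. euclideanreal) (Linf S)"

abbreviation "Rplus \<equiv> {0::real..}"
abbreviation "Rtimes \<equiv> {1::real..}"

definition Wstar :: "((real \<Rightarrow> real) \<Rightarrow> real) \<Rightarrow> ((real \<Rightarrow> real) \<Rightarrow> real)" where
  "Wstar \<phi> = restrict (\<lambda>f. \<phi> (\<lambda>x. f (exp x))) (Linf Rtimes)"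

definition M1 :: "((real \<Rightarrow> real) \<Rightarrow> real) set" where
  "M1 = {\<phi>. mean Rplus \<phi> \<and> (\<forall>f\<in>Linf Rplus.
     ereal (\<phi> f) \<le> Lim at_top (\<lambda>\<theta>. Limsup at_top (\<lambda>x.
        ereal ((1/\<theta>) * integral\<^sup>L (lebesgue_on {x..x+\<theta>}) f))))}"

definition RR :: "((real \<Rightarrow> real) \<Rightarrow> real) set" where
  "RR = {\<phi>. mean Rplus \<phi> \<and> (\<forall>f\<in>Linf Rplus.
     ereal (\<phi> f) \<le> Limsup at_top (\<lambda>x.
        ereal (exp (-x) * integral\<^sup>L (lebesgue_on {0..x}) (\<lambda>t. f t * exp t))))}"

definition L1 :: "((real \<Rightarrow> real) \<Rightarrow> real) set" where
  "L1 = {\<psi>. mean Rtimes \<psi> \<and> (\<forall>f\<in>Linf Rtimes.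
     ereal (\<psi> f) \<le> Lim at_top (\<lambda>\<theta>. Limsup at_top (\<lambda>x.
        ereal ((1 / ln \<theta>) * integral\<^sup>L (lebesgue_on {x..\<theta>*x}) (\<lambda>t. f t / t)))))}"

definition CC :: "((real \<Rightarrow> real) \<Rightarrow> real) set" where
  "CC = {\<psi>. mean Rtimes \<psi> \<and> (\<forall>f\<in>Linf Rtimes.
     ereal (\<psi> f) \<le> Limsup at_top (\<lambda>x.
        ereal ((1/x) * integral\<^sup>L (lebesgue_on {1..x}) f)))}"

definition cvx :: "'a set \<Rightarrow> real \<Rightarrow> ('a \<Rightarrow> real) \<Rightarrow> ('a \<Rightarrow> real) \<Rightarrow> ('a \<Rightarrow> real)" where
  "cvx I t \<phi> \<psi> = restrict (\<lambda>f. t * \<phi> f + (1 - t) * \<psi> f) I"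

definition Wstar_affine_on :: "((real \<Rightarrow> real) \<Rightarrow> real) set \<Rightarrow> bool" where
  "Wstar_affine_on K \<longleftrightarrow> (\<forall>\<phi>\<in>K. \<forall>\<psi>\<in>K. \<forall>t\<in>{0..1}.
      Wstar (cvx (Linf Rplus) t \<phi> \<psi>) = cvx (Linf Rtimes) t (Wstar \<phi>) (Wstar \<psi>))"

end

theory Submission
  imports Defs
begin


lemma space_leb_on[simp]: "space (lebesgue_on S) = S"
  by (simp add: space_restrict_space)

lemma AE_transfer:
  fixes h k :: "real \<Rightarrow> real"
  assumes S: "S \<in> sets lebesgue" and T: "T \<in> sets lebesgue"
    and hk: "\<forall>x\<in>S. h x \<in> T \<and> k (h x) = x" and kh: "\<forall>y\<in>T. k y \<in> S \<and> h (k y) = y"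
    and kd: "k differentiable_on T"
    and ae: "AE y in lebesgue_on T. P y"
  shows "AE x in lebesgue_on S. P (h x)"
proof -
  from ae obtain N where N1: "{y\<in>space (lebesgue_on T). \<not> P y} \<subseteq> N"
      and e0: "emeasure (lebesgue_on T) N = 0" and Ns: "N \<in> sets (lebesgue_on T)"
    by (rule AE_E)
  have N2: "N \<in> null_sets (lebesgue_on T)" using e0 Ns by (rule null_setsI)
  have NT: "N \<subseteq> T" and Nn: "N \<in> null_sets lebesgue"
    using null_sets_restrict_space[OF T, of N] N2 by blast+
  have "negligible N" using Nn negligible_iff_null_sets by blast
  then have "negligible (k ` N)"
    by (rule negligible_differentiable_image_negligible[OF order_refl]) (rule differentiable_on_subset[OF kd NT])
  then have kN0: "k ` N \<in> null_sets lebesgue" using negligible_iff_null_sets by blast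
  have kNS: "k ` N \<subseteq> S" using NT kh by blast
  have kN: "k ` N \<in> null_sets (lebesgue_on S)"
    using null_sets_restrict_space[OF S, of "k ` N"] kN0 kNS by blast
  show ?thesis
  proof (rule AE_I'[OF kN])
    show "{x \<in> space (lebesgue_on S). \<not> P (h x)} \<subseteq> k ` N"
    proof
      fix x assume "x \<in> {x \<in> space (lebesgue_on S). \<not> P (h x)}"
      then have x: "x \<in> S" "\<not> P (h x)" by auto
      then have "h x \<in> N" using N1 hk by auto
      moreover have "x = k (h x)" using hk x by auto
      ultimately show "x \<in> k ` N" by blast
    qed
  qed
qed

lemma meas_transfer:
  fixes h k f :: "real \<Rightarrow> real"
  assumes S: "S \<in> sets lebesgue" and T: "T \<in> sets lebesgue"
    and hk: "\<forall>x\<in>S. h x \<in> T \<and> k (h x) = x" and kh: "\<forall>y\<in>T. k y \<in> S \<and> h (k y) = y"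
    and kd: "k differentiable_on T"
    and f: "f \<in> borel_measurable (lebesgue_on T)"
  shows "(\<lambda>x. f (h x)) \<in> borel_measurable (lebesgue_on S)"
proof (rule borel_measurableI)
  fix B :: "real set" assume "open B"
  then have "f -` B \<inter> space (lebesgue_on T) \<in> sets (lebesgue_on T)"
    by (intro measurable_sets[OF f]) auto
  then have "k ` (f -` B \<inter> T) \<in> sets (lebesgue_on (k ` T))"
    by (intro differentiable_image_in_sets_lebesgue_on[OF T _ _ kd]) auto
  moreover have "k ` T = S" using hk kh by force
  moreover have "k ` (f -` B \<inter> T) = (\<lambda>x. f (h x)) -` B \<inter> S"
  proof
    show "k ` (f -` B \<inter> T) \<subseteq> (\<lambda>x. f (h x)) -` B \<inter> S" using kh by auto
    show "(\<lambda>x. f (h x)) -` B \<inter> S \<subseteq> k ` (f -` B \<inter> T)"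
    proof
      fix x assume x: "x \<in> (\<lambda>x. f (h x)) -` B \<inter> S"
      then have "x = k (h x)" "h x \<in> f -` B \<inter> T" using hk by auto
      then show "x \<in> k ` (f -` B \<inter> T)" by blast
    qed
  qed
  ultimately show "(\<lambda>x. f (h x)) -` B \<inter> space (lebesgue_on S) \<in> sets (lebesgue_on S)" by simp
qed

lemma Linf_transfer:
  fixes h k f :: "real \<Rightarrow> real"
  assumes S: "S \<in> sets lebesgue" and T: "T \<in> sets lebesgue"
    and hk: "\<forall>x\<in>S. h x \<in> T \<and> k (h x) = x" and kh: "\<forall>y\<in>T. k y \<in> S \<and> h (k y) = y"
    and kd: "k differentiable_on T"
    and f: "f \<in> Linf T"
  shows "(\<lambda>x. f (h x)) \<in> Linf S"
proof -
  from f obtain C where m: "f \<in> borel_measurable (lebesgue_on T)" and C: "AE x in lebesgue_on T. \<bar>f x\<bar> \<le> C"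
    by (auto simp: Linf_def)
  show ?thesis unfolding Linf_def
    using meas_transfer[OF S T hk kh kd m] AE_transfer[OF S T hk kh kd C] by blast
qed

lemma Linf_add: "f \<in> Linf S \<Longrightarrow> g \<in> Linf S \<Longrightarrow> (\<lambda>x. f x + g x) \<in> Linf S"
proof -
  assume f: "f \<in> Linf S" and g: "g \<in> Linf S"
  from f obtain C where m: "f \<in> borel_measurable (lebesgue_on S)" and C: "AE x in lebesgue_on S. \<bar>f x\<bar> \<le> C"
    by (auto simp: Linf_def)
  from g obtain D where m2: "g \<in> borel_measurable (lebesgue_on S)" and D: "AE x in lebesgue_on S. \<bar>g x\<bar> \<le> D"
    by (auto simp: Linf_def)
  have "AE x in lebesgue_on S. \<bar>f x + g x\<bar> \<le> C + D"
    using C D by eventually_elim auto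
  then show ?thesis using m m2 by (auto simp: Linf_def)
qed

lemma Linf_cmult: "f \<in> Linf S \<Longrightarrow> (\<lambda>x. c * f x) \<in> Linf S"
proof -
  assume f: "f \<in> Linf S"
  from f obtain C where m: "f \<in> borel_measurable (lebesgue_on S)" and C: "AE x in lebesgue_on S. \<bar>f x\<bar> \<le> C"
    by (auto simp: Linf_def)
  have "AE x in lebesgue_on S. \<bar>c * f x\<bar> \<le> \<bar>c\<bar> * C"
    using C by eventually_elim (auto simp: abs_mult intro: mult_left_mono)
  then show ?thesis using m by (auto simp: Linf_def)
qed

lemma Linf_const: "(\<lambda>x. c) \<in> Linf S"
  unfolding Linf_def by auto

lemma mean_cong:
  assumes m: "mean S \<phi>" and f: "f \<in> Linf S" and g: "g \<in> Linf S" and eq: "\<forall>x\<in>S. f x = g x"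
  shows "\<phi> f = \<phi> g"
proof -
  define d where "d = (\<lambda>x. f x + (-1) * g x)"
  have d: "d \<in> Linf S" unfolding d_def by (intro Linf_add Linf_cmult f g)
  have nd: "(\<lambda>x. (-1) * d x) \<in> Linf S" by (intro Linf_cmult d)
  have d0: "\<forall>x\<in>S. d x = 0" using eq by (auto simp: d_def)
  have "0 \<le> \<phi> d" using m d d0 unfolding mean_def by (auto intro!: AE_I2)
  moreover have "0 \<le> \<phi> (\<lambda>x. (-1) * d x)" using m nd d0 unfolding mean_def by (auto intro!: AE_I2)
  moreover have "\<phi> (\<lambda>x. (-1) * d x) = (-1) * \<phi> d" using m d unfolding mean_def
    by blast
  ultimately have "\<phi> d = 0" by auto
  moreover have "\<phi> d = \<phi> f + \<phi> (\<lambda>x. (-1) * g x)"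
  proof -
    from m have add: "\<And>a b. a \<in> Linf S \<Longrightarrow> b \<in> Linf S \<Longrightarrow> \<phi> (\<lambda>x. a x + b x) = \<phi> a + \<phi> b"
      by (auto simp: mean_def)
    show ?thesis unfolding d_def by (rule add[OF f Linf_cmult[OF g]])
  qed
  moreover have "\<phi> (\<lambda>x. (-1) * g x) = (-1) * \<phi> g"
    using m g unfolding mean_def by blast
  ultimately show ?thesis by simp
qed


definition Tr :: "(real \<Rightarrow> real) \<Rightarrow> real set \<Rightarrow> ((real \<Rightarrow> real) \<Rightarrow> real) \<Rightarrow> ((real \<Rightarrow> real) \<Rightarrow> real)" where
  "Tr h T \<phi> = restrict (\<lambda>f. \<phi> (\<lambda>x. f (h x))) (Linf T)"

lemma Tr_cont:
  assumes "\<forall>f\<in>Linf T. (\<lambda>x. f (h x)) \<in> Linf S"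
  shows "continuous_map (subtopology (weak_star S) A) (weak_star T) (Tr h T)"
  unfolding weak_star_def continuous_map_componentwise
proof (intro conjI ballI)
  show "Tr h T ` topspace (subtopology (product_topology (\<lambda>_. euclideanreal) (Linf S)) A) \<subseteq> extensional (Linf T)"
    unfolding Tr_def by (rule image_subsetI, rule restrict_extensional)
  fix f assume f: "f \<in> Linf T"
  then have eq: "(\<lambda>\<phi>. Tr h T \<phi> f) = (\<lambda>\<phi>. \<phi> (\<lambda>x. f (h x)))" by (simp add: Tr_def)
  show "continuous_map (subtopology (product_topology (\<lambda>_. euclideanreal) (Linf S)) A) euclideanreal (\<lambda>\<phi>. Tr h T \<phi> f)"
  proof -
    have fh: "(\<lambda>x. f (h x)) \<in> Linf S" using assms f by (rule bspec)
    show ?thesis unfolding eq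
      by (rule continuous_map_from_subtopology[OF continuous_map_product_projection[OF fh]])
  qed
qed

lemma mean_Tr:
  fixes h k :: "real \<Rightarrow> real"
  assumes S: "S \<in> sets lebesgue" and T: "T \<in> sets lebesgue"
    and hk: "\<forall>x\<in>S. h x \<in> T \<and> k (h x) = x" and kh: "\<forall>y\<in>T. k y \<in> S \<and> h (k y) = y"
    and kd: "k differentiable_on T"
    and m: "mean S \<phi>"
  shows "mean T (Tr h T \<phi>)"
proof -
  note tr = Linf_transfer[OF S T hk kh kd]
  from m have add: "\<And>a b. a \<in> Linf S \<Longrightarrow> b \<in> Linf S \<Longrightarrow> \<phi> (\<lambda>x. a x + b x) = \<phi> a + \<phi> b"
    and mul: "\<And>c a. a \<in> Linf S \<Longrightarrow> \<phi> (\<lambda>x. c * a x) = c * \<phi> a"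
    and pos: "\<And>a. a \<in> Linf S \<Longrightarrow> (AE x in lebesgue_on S. 0 \<le> a x) \<Longrightarrow> 0 \<le> \<phi> a"
    and one: "\<phi> (\<lambda>x. 1) = 1"
    by (auto simp: mean_def)
  show ?thesis unfolding mean_def
  proof (intro conjI ballI allI impI)
    show "Tr h T \<phi> \<in> extensional (Linf T)" by (simp add: Tr_def)
    fix f g assume f: "f \<in> Linf T" and g: "g \<in> Linf T"
    show "Tr h T \<phi> (\<lambda>x. f x + g x) = Tr h T \<phi> f + Tr h T \<phi> g"
      using f g Linf_add[OF f g] add[OF tr[OF f] tr[OF g]] by (simp add: Tr_def)
  next
    fix c f assume f: "f \<in> Linf T"
    show "Tr h T \<phi> (\<lambda>x. c * f x) = c * Tr h T \<phi> f"
      using f Linf_cmult[OF f] mul[OF tr[OF f]] by (simp add: Tr_def)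
  next
    fix f assume f: "f \<in> Linf T" and ae: "AE x in lebesgue_on T. 0 \<le> f x"
    show "0 \<le> Tr h T \<phi> f"
      using f pos[OF tr[OF f] AE_transfer[OF S T hk kh kd ae]] by (simp add: Tr_def)
  next
    show "Tr h T \<phi> (\<lambda>x. 1) = 1" using one Linf_const[of 1 T] by (simp add: Tr_def)
  qed
qed

lemma Tr_inv:
  fixes h k :: "real \<Rightarrow> real"
  assumes S: "S \<in> sets lebesgue" and T: "T \<in> sets lebesgue"
    and hk: "\<forall>x\<in>S. h x \<in> T \<and> k (h x) = x" and kh: "\<forall>y\<in>T. k y \<in> S \<and> h (k y) = y"
    and kd: "k differentiable_on T" and hd: "h differentiable_on S"
    and m: "mean S \<phi>"
  shows "Tr k S (Tr h T \<phi>) = \<phi>"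
proof -
  note tr = Linf_transfer[OF S T hk kh kd]
  note tr2 = Linf_transfer[OF T S kh hk hd]
  have ext: "\<phi> \<in> extensional (Linf S)" using m by (simp add: mean_def)
  show ?thesis
  proof (rule extensionalityI[OF _ ext])
    show "Tr k S (Tr h T \<phi>) \<in> extensional (Linf S)" by (simp add: Tr_def)
    fix g assume g: "g \<in> Linf S"
    have g1: "(\<lambda>x. g (k x)) \<in> Linf T" by (rule tr2[OF g])
    have g2: "(\<lambda>x. g (k (h x))) \<in> Linf S" by (rule tr[OF g1])
    have "Tr k S (Tr h T \<phi>) g = \<phi> (\<lambda>x. g (k (h x)))" using g g1 by (simp add: Tr_def)
    also have "\<dots> = \<phi> g" by (rule mean_cong[OF m g2 g]) (use hk in auto)
    finally show "Tr k S (Tr h T \<phi>) g = \<phi> g" .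
  qed
qed

lemma Tr_homeo:
  fixes h k :: "real \<Rightarrow> real"
  assumes S: "S \<in> sets lebesgue" and T: "T \<in> sets lebesgue"
    and hk: "\<forall>x\<in>S. h x \<in> T \<and> k (h x) = x" and kh: "\<forall>y\<in>T. k y \<in> S \<and> h (k y) = y"
    and kd: "k differentiable_on T" and hd: "h differentiable_on S"
    and A: "A \<subseteq> Collect (mean S)" and B: "B \<subseteq> Collect (mean T)"
    and AB: "\<forall>\<phi>\<in>A. Tr h T \<phi> \<in> B" and BA: "\<forall>\<psi>\<in>B. Tr k S \<psi> \<in> A"
  shows "homeomorphic_map (subtopology (weak_star S) A) (subtopology (weak_star T) B) (Tr h T)"
  unfolding homeomorphic_map_maps homeomorphic_maps_def
proof (intro exI[of _ "Tr k S"] conjI ballI)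
  show "continuous_map (subtopology (weak_star S) A) (subtopology (weak_star T) B) (Tr h T)"
    unfolding continuous_map_in_subtopology
    using Tr_cont[of T h S A] Linf_transfer[OF S T hk kh kd] AB by auto
  show "continuous_map (subtopology (weak_star T) B) (subtopology (weak_star S) A) (Tr k S)"
    unfolding continuous_map_in_subtopology
    using Tr_cont[of S k T B] Linf_transfer[OF T S kh hk hd] BA by auto
  fix \<phi> assume "\<phi> \<in> topspace (subtopology (weak_star S) A)"
  then have "mean S \<phi>" using A by auto
  then show "Tr k S (Tr h T \<phi>) = \<phi>" by (rule Tr_inv[OF S T hk kh kd hd])
next
  fix \<psi> assume "\<psi> \<in> topspace (subtopology (weak_star T) B)"
  then have "mean T \<psi>" using B by auto
  then show "Tr h T (Tr k S \<psi>) = \<psi>" by (rule Tr_inv[OF T S kh hk hd kd])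
qed

lemma Tr_affine:
  assumes "\<forall>f\<in>Linf T. (\<lambda>x. f (h x)) \<in> Linf S"
  shows "Tr h T (cvx (Linf S) t \<phi> \<psi>) = cvx (Linf T) t (Tr h T \<phi>) (Tr h T \<psi>)"
  unfolding Tr_def cvx_def by (intro restrict_ext) (use assms in simp)



lemma absint_iff: "S \<in> sets lebesgue \<Longrightarrow> (f::real\<Rightarrow>real) absolutely_integrable_on S \<longleftrightarrow> integrable (lebesgue_on S) f"
  by (simp add: absolutely_integrable_on_def set_integrable_def integrable_restrict_space)

lemma cov_exp:
  fixes F :: "real \<Rightarrow> real"
  assumes ab: "a \<le> b" and int: "integrable (lebesgue_on {exp a..exp b}) F"
  shows "integral\<^sup>L (lebesgue_on {exp a..exp b}) F = integral\<^sup>L (lebesgue_on {a..b}) (\<lambda>s. exp s * F (exp s))"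
proof -
  have img: "exp ` {a..b} = {exp a..exp b}"
  proof
    show "exp ` {a..b} \<subseteq> {exp a..exp b}" by auto
    show "{exp a..exp b} \<subseteq> exp ` {a..b}"
    proof
      fix y assume y: "y \<in> {exp a..exp b}"
      have "exp a \<le> y" using y by simp
      then have yp: "0 < y" by (rule less_le_trans[OF exp_gt_zero])
      then have "y = exp (ln y)" by simp
      moreover have "ln y \<in> {a..b}" using y yp
        by (metis atLeastAtMost_iff exp_le_cancel_iff exp_ln)
      ultimately show "y \<in> exp ` {a..b}" by blast
    qed
  qed
  have der: "\<And>x. x \<in> {a..b} \<Longrightarrow> (exp has_field_derivative exp x) (at x within {a..b})"
    by (auto intro!: derivative_eq_intros)
  have inj: "inj_on exp {a..b}" by (rule inj_onI) simp
  have Fabs: "F absolutely_integrable_on {exp a..exp b}"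
    using absint_iff[of "{exp a..exp b}" F] int by simp
  have S': "{a..b} \<in> sets lebesgue" by simp
  note cv = has_absolute_integral_change_of_variables_1'[OF S' der inj]
  have "(\<lambda>x. \<bar>exp x\<bar> * F (exp x)) absolutely_integrable_on {a..b} \<and>
        integral {a..b} (\<lambda>x. \<bar>exp x\<bar> * F (exp x)) = integral {exp a..exp b} F"
    apply (rule cv[THEN iffD2])
     apply assumption
    apply (simp only: img)
    apply (rule conjI[OF Fabs refl])
    done
  then have A: "(\<lambda>x. exp x * F (exp x)) absolutely_integrable_on {a..b}"
    and B: "integral {a..b} (\<lambda>x. exp x * F (exp x)) = integral {exp a..exp b} F" by simp_all
  have "integral\<^sup>L (lebesgue_on {exp a..exp b}) F = integral {exp a..exp b} F"
    by (rule lebesgue_integral_eq_integral[OF int]) simp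
  also have "\<dots> = integral {a..b} (\<lambda>x. exp x * F (exp x))" using B by simp
  also have "\<dots> = integral\<^sup>L (lebesgue_on {a..b}) (\<lambda>s. exp s * F (exp s))"
  proof -
    have "integrable (lebesgue_on {a..b}) (\<lambda>s. exp s * F (exp s))"
      using A absint_iff[of "{a..b}" "\<lambda>s. exp s * F (exp s)"] by simp
    then show ?thesis by (intro lebesgue_integral_eq_integral[symmetric]) simp_all
  qed
  finally show ?thesis .
qed

lemma Linf_integrable:
  fixes f :: "real \<Rightarrow> real"
  assumes f: "f \<in> Linf S" and S: "S \<in> sets lebesgue" and sub: "{c..d} \<subseteq> S"
  shows "integrable (lebesgue_on {c..d}) f"
proof -
  from f obtain C where m: "f \<in> borel_measurable (lebesgue_on S)" and Cb: "AE x in lebesgue_on S. \<bar>f x\<bar> \<le> C"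
    by (auto simp: Linf_def)
  have m2: "f \<in> borel_measurable (lebesgue_on {c..d})"
    by (rule measurable_restrict_mono[OF m sub])
  have "AE x in lebesgue. x \<in> S \<longrightarrow> \<bar>f x\<bar> \<le> C" using Cb S by (simp add: AE_restrict_space_iff)
  then have "AE x in lebesgue. x \<in> {c..d} \<longrightarrow> \<bar>f x\<bar> \<le> C" using sub by (auto elim!: eventually_mono)
  then have Cb2: "AE x in lebesgue_on {c..d}. norm (f x) \<le> C" by (simp add: AE_restrict_space_iff)
  have fm: "finite_measure (lebesgue_on {c..d})"
    by (rule finite_measure_lebesgue_on) (rule lmeasurable_interval(1))
  show ?thesis by (rule finite_measure.integrable_const_bound[OF fm Cb2 m2])
qed

lemma Linf_div:
  fixes f :: "real \<Rightarrow> real"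
  assumes f: "f \<in> Linf Rtimes"
  shows "(\<lambda>t. f t / t) \<in> Linf Rtimes"
proof -
  from f obtain C where m: "f \<in> borel_measurable (lebesgue_on Rtimes)" and Cb: "AE x in lebesgue_on Rtimes. \<bar>f x\<bar> \<le> C"
    by (auto simp: Linf_def)
  have m2: "(\<lambda>t. f t / t) \<in> borel_measurable (lebesgue_on Rtimes)"
  proof -
    have idm: "(\<lambda>x::real. x) \<in> borel_measurable (lebesgue_on Rtimes)"
      using id_borel_measurable_lebesgue_on by (simp add: id_def)
    show ?thesis using m idm by (rule borel_measurable_divide)
  qed
  have "AE x in lebesgue_on Rtimes. x \<in> space (lebesgue_on Rtimes)" by (rule AE_I2)
  with Cb have "AE x in lebesgue_on Rtimes. \<bar>f x / x\<bar> \<le> C"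
  proof eventually_elim
    case (elim x)
    then have x: "1 \<le> x" by simp
    have "\<bar>f x / x\<bar> = \<bar>f x\<bar> / x" using x by (simp add: abs_div)
    also have "\<dots> \<le> \<bar>f x\<bar>" using x by (simp add: divide_le_eq mult_le_cancel_left1)
    finally show ?case using elim by simp
  qed
  then show ?thesis using m2 by (auto simp: Linf_def)
qed

lemma Limsup_exp: "Limsup at_top (H::real \<Rightarrow> ereal) = Limsup at_top (\<lambda>x. H (exp x))"
proof -
  have inj: "inj (exp::real \<Rightarrow> real)" by (rule injI) simp
  show ?thesis
    using Limsup_filtermap_ge[where f=exp and F=at_top and g=H] Limsup_filtermap_le[OF inj, where F=at_top and g=H]
    by (simp add: filtermap_exp_at_top)
qed

lemma Lim_exp: "Lim at_top (G::real \<Rightarrow> ereal) = Lim at_top (\<lambda>x. G (exp x))"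
proof -
  have "\<And>L. (G \<longlongrightarrow> L) at_top \<longleftrightarrow> ((\<lambda>x. G (exp x)) \<longlongrightarrow> L) at_top"
    by (metis filterlim_filtermap filtermap_exp_at_top)
  then show ?thesis unfolding t2_space_class.Lim_def by simp
qed



lemma Rtimes_sets: "Rtimes \<in> sets lebesgue" by simp
lemma Rplus_sets: "Rplus \<in> sets lebesgue" by simp

lemma hk_exp: "\<forall>x\<in>Rplus. exp x \<in> Rtimes \<and> ln (exp x) = x" by simp
lemma kh_exp: "\<forall>y\<in>Rtimes. ln y \<in> Rplus \<and> exp (ln y) = y" by simp

lemma ln_diff: "ln differentiable_on Rtimes"
  unfolding differentiable_on_def
proof
  fix x :: real assume "x \<in> Rtimes"
  then have "(ln has_real_derivative inverse x) (at x)" by (intro DERIV_ln) simp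
  then show "ln differentiable at x within Rtimes"
    by (metis field_differentiable_def field_differentiable_imp_differentiable has_field_derivative_at_within)
qed

lemma exp_diff: "exp differentiable_on Rplus"
  unfolding differentiable_on_def
proof
  fix x :: real assume "x \<in> Rplus"
  have "(exp has_real_derivative exp x) (at x)" by (rule DERIV_exp)
  then show "exp differentiable at x within Rplus"
    by (metis field_differentiable_def field_differentiable_imp_differentiable has_field_derivative_at_within)
qed


lemma int_KL:
  fixes f :: "real \<Rightarrow> real"
  assumes f: "f \<in> Linf Rtimes" and th: "0 \<le> \<theta>" and x: "0 \<le> x"
  shows "integral\<^sup>L (lebesgue_on {exp x..exp \<theta> * exp x}) (\<lambda>t. f t / t)
       = integral\<^sup>L (lebesgue_on {x..x+\<theta>}) (\<lambda>t. f (exp t))"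
proof -
  have e: "exp \<theta> * exp x = exp (x + \<theta>)" by (simp add: exp_add)
  have sub: "{exp x..exp (x+\<theta>)} \<subseteq> Rtimes" using x by auto
  have int: "integrable (lebesgue_on {exp x..exp (x+\<theta>)}) (\<lambda>t. f t / t)"
    by (rule Linf_integrable[OF Linf_div[OF f] Rtimes_sets sub])
  have "integral\<^sup>L (lebesgue_on {exp x..exp (x+\<theta>)}) (\<lambda>t. f t / t)
      = integral\<^sup>L (lebesgue_on {x..x+\<theta>}) (\<lambda>s. exp s * (f (exp s) / exp s))"
    by (rule cov_exp[OF _ int]) (use th in simp)
  also have "(\<lambda>s. exp s * (f (exp s) / exp s)) = (\<lambda>s. f (exp s))" by simp
  finally show ?thesis by (simp only: e)
qed

lemma int_KC:
  fixes f :: "real \<Rightarrow> real"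
  assumes f: "f \<in> Linf Rtimes" and x: "0 \<le> x"
  shows "integral\<^sup>L (lebesgue_on {1..exp x}) f
       = integral\<^sup>L (lebesgue_on {0..x}) (\<lambda>t. f (exp t) * exp t)"
proof -
  have sub: "{exp 0..exp x} \<subseteq> Rtimes" by auto
  have int: "integrable (lebesgue_on {exp 0..exp x}) f"
    by (rule Linf_integrable[OF f Rtimes_sets sub])
  have "integral\<^sup>L (lebesgue_on {exp 0..exp x}) f
      = integral\<^sup>L (lebesgue_on {0..x}) (\<lambda>s. exp s * f (exp s))"
    by (rule cov_exp[OF x int])
  also have "(\<lambda>s. exp s * f (exp s)) = (\<lambda>s. f (exp s) * exp s)" by (simp add: mult.commute)
  finally show ?thesis by simp
qed

lemma KL:
  fixes f :: "real \<Rightarrow> real"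
  assumes f: "f \<in> Linf Rtimes"
  shows "Lim at_top (\<lambda>\<theta>. Limsup at_top (\<lambda>x.
        ereal ((1 / ln \<theta>) * integral\<^sup>L (lebesgue_on {x..\<theta>*x}) (\<lambda>t. f t / t))))
      = Lim at_top (\<lambda>\<theta>. Limsup at_top (\<lambda>x.
        ereal ((1/\<theta>) * integral\<^sup>L (lebesgue_on {x..x+\<theta>}) (\<lambda>t. f (exp t)))))"
proof -
  define E where "E \<theta> x = ereal ((1 / ln \<theta>) * integral\<^sup>L (lebesgue_on {x..\<theta>*x}) (\<lambda>t. f t / t))" for \<theta> x
  define M where "M \<theta> x = ereal ((1/\<theta>) * integral\<^sup>L (lebesgue_on {x..x+\<theta>}) (\<lambda>t. f (exp t)))" for \<theta> x
  have "Lim at_top (\<lambda>\<theta>. Limsup at_top (\<lambda>x. E \<theta> x)) = Lim at_top (\<lambda>\<theta>. Limsup at_top (\<lambda>x. E (exp \<theta>) x))"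
    by (rule Lim_exp)
  also have "(\<lambda>\<theta>. Limsup at_top (\<lambda>x. E (exp \<theta>) x)) = (\<lambda>\<theta>. Limsup at_top (\<lambda>x. E (exp \<theta>) (exp x)))"
    by (rule ext, rule Limsup_exp)
  also have "Lim at_top (\<lambda>\<theta>. Limsup at_top (\<lambda>x. E (exp \<theta>) (exp x))) = Lim at_top (\<lambda>\<theta>. Limsup at_top (\<lambda>x. M \<theta> x))"
  proof (rule Lim_cong[OF _ refl])
    show "\<forall>\<^sub>F \<theta> in at_top. Limsup at_top (\<lambda>x. E (exp \<theta>) (exp x)) = Limsup at_top (\<lambda>x. M \<theta> x)"
      using eventually_ge_at_top[of "0::real"]
    proof eventually_elim
      case (elim \<theta>)
      show ?case
      proof (rule Limsup_eq)
        show "\<forall>\<^sub>F x in at_top. E (exp \<theta>) (exp x) = M \<theta> x"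
          using eventually_ge_at_top[of "0::real"]
        proof eventually_elim
          case (elim x)
          show ?case unfolding E_def M_def
            using int_KL[OF f \<open>0 \<le> \<theta>\<close> elim] by simp
        qed
      qed
    qed
  qed
  finally show ?thesis unfolding E_def M_def .
qed

lemma KC:
  fixes f :: "real \<Rightarrow> real"
  assumes f: "f \<in> Linf Rtimes"
  shows "Limsup at_top (\<lambda>x. ereal ((1/x) * integral\<^sup>L (lebesgue_on {1..x}) f))
       = Limsup at_top (\<lambda>x. ereal (exp (-x) * integral\<^sup>L (lebesgue_on {0..x}) (\<lambda>t. f (exp t) * exp t)))"
proof -
  have "Limsup at_top (\<lambda>x. ereal ((1/x) * integral\<^sup>L (lebesgue_on {1..x}) f))
      = Limsup at_top (\<lambda>x. ereal ((1/exp x) * integral\<^sup>L (lebesgue_on {1..exp x}) f))"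
    by (rule Limsup_exp)
  also have "\<dots> = Limsup at_top (\<lambda>x. ereal (exp (-x) * integral\<^sup>L (lebesgue_on {0..x}) (\<lambda>t. f (exp t) * exp t)))"
  proof (rule Limsup_eq)
    show "\<forall>\<^sub>F x in at_top. ereal ((1/exp x) * integral\<^sup>L (lebesgue_on {1..exp x}) f)
        = ereal (exp (-x) * integral\<^sup>L (lebesgue_on {0..x}) (\<lambda>t. f (exp t) * exp t))"
      using eventually_ge_at_top[of "0::real"]
    proof eventually_elim
      case (elim x)
      show ?case using int_KC[OF f elim] by (simp add: exp_minus inverse_eq_divide)
    qed
  qed
  finally show ?thesis .
qed



lemma Wstar_Tr: "Wstar = Tr exp Rtimes"
  by (rule ext) (simp add: Wstar_def Tr_def)

lemmas tr_exp = Linf_transfer[OF Rplus_sets Rtimes_sets hk_exp kh_exp ln_diff]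
lemmas tr_ln = Linf_transfer[OF Rtimes_sets Rplus_sets kh_exp hk_exp exp_diff]

lemma M1_to_L1: "\<phi> \<in> M1 \<Longrightarrow> Tr exp Rtimes \<phi> \<in> L1"
proof -
  assume "\<phi> \<in> M1"
  then have m: "mean Rplus \<phi>" and b: "\<And>g. g \<in> Linf Rplus \<Longrightarrow> ereal (\<phi> g) \<le> Lim at_top (\<lambda>\<theta>. Limsup at_top (\<lambda>x.
        ereal ((1/\<theta>) * integral\<^sup>L (lebesgue_on {x..x+\<theta>}) g)))"
    by (auto simp: M1_def)
  show ?thesis unfolding L1_def
  proof (intro CollectI conjI ballI)
    show "mean Rtimes (Tr exp Rtimes \<phi>)"
      by (rule mean_Tr[OF Rplus_sets Rtimes_sets hk_exp kh_exp ln_diff m])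
    fix f assume f: "f \<in> Linf Rtimes"
    have "ereal (Tr exp Rtimes \<phi> f) = ereal (\<phi> (\<lambda>x. f (exp x)))" using f by (simp add: Tr_def)
    also have "\<dots> \<le> Lim at_top (\<lambda>\<theta>. Limsup at_top (\<lambda>x.
        ereal ((1/\<theta>) * integral\<^sup>L (lebesgue_on {x..x+\<theta>}) (\<lambda>t. f (exp t)))))" by (rule b[OF tr_exp[OF f]])
    also have "\<dots> = Lim at_top (\<lambda>\<theta>. Limsup at_top (\<lambda>x.
        ereal ((1 / ln \<theta>) * integral\<^sup>L (lebesgue_on {x..\<theta>*x}) (\<lambda>t. f t / t))))"
      by (rule KL[OF f, symmetric])
    finally show "ereal (Tr exp Rtimes \<phi> f) \<le> Lim at_top (\<lambda>\<theta>. Limsup at_top (\<lambda>x.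
        ereal ((1 / ln \<theta>) * integral\<^sup>L (lebesgue_on {x..\<theta>*x}) (\<lambda>t. f t / t))))" .
  qed
qed

lemma L1_to_M1: "\<psi> \<in> L1 \<Longrightarrow> Tr ln Rplus \<psi> \<in> M1"
proof -
  assume "\<psi> \<in> L1"
  then have m: "mean Rtimes \<psi>" and b: "\<And>f. f \<in> Linf Rtimes \<Longrightarrow> ereal (\<psi> f) \<le> Lim at_top (\<lambda>\<theta>. Limsup at_top (\<lambda>x.
        ereal ((1 / ln \<theta>) * integral\<^sup>L (lebesgue_on {x..\<theta>*x}) (\<lambda>t. f t / t))))"
    by (auto simp: L1_def)
  show ?thesis unfolding M1_def
  proof (intro CollectI conjI ballI)
    show "mean Rplus (Tr ln Rplus \<psi>)"
      by (rule mean_Tr[OF Rtimes_sets Rplus_sets kh_exp hk_exp exp_diff m])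
    fix g assume g: "g \<in> Linf Rplus"
    have g1: "(\<lambda>x. g (ln x)) \<in> Linf Rtimes" by (rule tr_ln[OF g])
    have "ereal (Tr ln Rplus \<psi> g) = ereal (\<psi> (\<lambda>x. g (ln x)))" using g by (simp add: Tr_def)
    also have "\<dots> \<le> Lim at_top (\<lambda>\<theta>. Limsup at_top (\<lambda>x.
        ereal ((1 / ln \<theta>) * integral\<^sup>L (lebesgue_on {x..\<theta>*x}) (\<lambda>t. g (ln t) / t))))" by (rule b[OF g1])
    also have "\<dots> = Lim at_top (\<lambda>\<theta>. Limsup at_top (\<lambda>x.
        ereal ((1/\<theta>) * integral\<^sup>L (lebesgue_on {x..x+\<theta>}) (\<lambda>t. g (ln (exp t))))))"
      by (rule KL[OF g1])
    also have "\<dots> = Lim at_top (\<lambda>\<theta>. Limsup at_top (\<lambda>x.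
        ereal ((1/\<theta>) * integral\<^sup>L (lebesgue_on {x..x+\<theta>}) g)))"
      by simp
    finally show "ereal (Tr ln Rplus \<psi> g) \<le> Lim at_top (\<lambda>\<theta>. Limsup at_top (\<lambda>x.
        ereal ((1/\<theta>) * integral\<^sup>L (lebesgue_on {x..x+\<theta>}) g)))" .
  qed
qed

lemma RR_to_CC: "\<phi> \<in> RR \<Longrightarrow> Tr exp Rtimes \<phi> \<in> CC"
proof -
  assume "\<phi> \<in> RR"
  then have m: "mean Rplus \<phi>" and b: "\<And>g. g \<in> Linf Rplus \<Longrightarrow> ereal (\<phi> g) \<le> Limsup at_top (\<lambda>x.
        ereal (exp (-x) * integral\<^sup>L (lebesgue_on {0..x}) (\<lambda>t. g t * exp t)))"
    by (auto simp: RR_def)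
  show ?thesis unfolding CC_def
  proof (intro CollectI conjI ballI)
    show "mean Rtimes (Tr exp Rtimes \<phi>)"
      by (rule mean_Tr[OF Rplus_sets Rtimes_sets hk_exp kh_exp ln_diff m])
    fix f assume f: "f \<in> Linf Rtimes"
    have "ereal (Tr exp Rtimes \<phi> f) = ereal (\<phi> (\<lambda>x. f (exp x)))" using f by (simp add: Tr_def)
    also have "\<dots> \<le> Limsup at_top (\<lambda>x. ereal (exp (-x) * integral\<^sup>L (lebesgue_on {0..x}) (\<lambda>t. f (exp t) * exp t)))" by (rule b[OF tr_exp[OF f]])
    also have "\<dots> = Limsup at_top (\<lambda>x. ereal ((1/x) * integral\<^sup>L (lebesgue_on {1..x}) f))"
      by (rule KC[OF f, symmetric])
    finally show "ereal (Tr exp Rtimes \<phi> f) \<le> Limsup at_top (\<lambda>x. ereal ((1/x) * integral\<^sup>L (lebesgue_on {1..x}) f))" .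
  qed
qed

lemma CC_to_RR: "\<psi> \<in> CC \<Longrightarrow> Tr ln Rplus \<psi> \<in> RR"
proof -
  assume "\<psi> \<in> CC"
  then have m: "mean Rtimes \<psi>" and b: "\<And>f. f \<in> Linf Rtimes \<Longrightarrow> ereal (\<psi> f) \<le> Limsup at_top (\<lambda>x. ereal ((1/x) * integral\<^sup>L (lebesgue_on {1..x}) f))"
    by (auto simp: CC_def)
  show ?thesis unfolding RR_def
  proof (intro CollectI conjI ballI)
    show "mean Rplus (Tr ln Rplus \<psi>)"
      by (rule mean_Tr[OF Rtimes_sets Rplus_sets kh_exp hk_exp exp_diff m])
    fix g assume g: "g \<in> Linf Rplus"
    have g1: "(\<lambda>x. g (ln x)) \<in> Linf Rtimes" by (rule tr_ln[OF g])
    have "ereal (Tr ln Rplus \<psi> g) = ereal (\<psi> (\<lambda>x. g (ln x)))" using g by (simp add: Tr_def)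
    also have "\<dots> \<le> Limsup at_top (\<lambda>x. ereal ((1/x) * integral\<^sup>L (lebesgue_on {1..x}) (\<lambda>t. g (ln t))))" by (rule b[OF g1])
    also have "\<dots> = Limsup at_top (\<lambda>x. ereal (exp (-x) * integral\<^sup>L (lebesgue_on {0..x}) (\<lambda>t. g (ln (exp t)) * exp t)))"
      by (rule KC[OF g1])
    also have "\<dots> = Limsup at_top (\<lambda>x. ereal (exp (-x) * integral\<^sup>L (lebesgue_on {0..x}) (\<lambda>t. g t * exp t)))"
      by simp
    finally show "ereal (Tr ln Rplus \<psi> g) \<le> Limsup at_top (\<lambda>x.
        ereal (exp (-x) * integral\<^sup>L (lebesgue_on {0..x}) (\<lambda>t. g t * exp t)))" .
  qed
qed

theorem theorem4p2:
  shows "homeomorphic_map (subtopology (weak_star Rplus) M1) (subtopology (weak_star Rtimes) L1) Wstar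
       \<and> Wstar_affine_on M1
       \<and> homeomorphic_map (subtopology (weak_star Rplus) RR) (subtopology (weak_star Rtimes) CC) Wstar
       \<and> Wstar_affine_on RR"
proof (intro conjI)
  have aff: "\<And>K. Wstar_affine_on K"
    unfolding Wstar_affine_on_def Wstar_Tr
    by (intro ballI Tr_affine) (use tr_exp in blast)
  show "Wstar_affine_on M1" by (rule aff)
  show "Wstar_affine_on RR" by (rule aff)
  show "homeomorphic_map (subtopology (weak_star Rplus) M1) (subtopology (weak_star Rtimes) L1) Wstar"
    unfolding Wstar_Tr
    by (rule Tr_homeo[OF Rplus_sets Rtimes_sets hk_exp kh_exp ln_diff exp_diff])
       (use M1_to_L1 L1_to_M1 in \<open>auto simp: M1_def L1_def\<close>)
  show "homeomorphic_map (subtopology (weak_star Rplus) RR) (subtopology (weak_star Rtimes) CC) Wstar"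
    unfolding Wstar_Tr
    by (rule Tr_homeo[OF Rplus_sets Rtimes_sets hk_exp kh_exp ln_diff exp_diff])
       (use RR_to_CC CC_to_RR in \<open>auto simp: RR_def CC_def\<close>)
qed


end
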